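(* Let $T\in\mathbb R^{m\times n}$ be injective and satisfy the positive cone condition, and $y\in\mathbb R^m$. Then for every $\lambda>0$, $$|x_\mu^i|\le|x_\lambda^i|\qquad\text{for all }i\in I(\lambda)\text{ and all }0<\mu\le\lambda.$$
   Context: For $\lambda>0$, $x_\lambda$ is the unique minimizer of $x\mapsto\frac{\lambda}{2}\|Tx-y\|_2^2+\|x\|_1$ on $\mathbb R^n$; $I(\lambda)=\{i:x_\lambda^i\ne0\}$. Positive cone condition: for every nonempty $J\subset\{1,\dots,n\}$, with $T^J$ the submatrix of columns indexed by $J$ and $S_J=((T^J)^TT^J)^{-1}$, one has $(S_J)_{i,i}-\sum_{j\ne i}|(S_J)_{i,j}|\ge0$ for all $i\in J$. *)

theory Defs
  imports "HOL-Analysis.Analysis"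
begin

definition lasso_obj :: "real^'n^'m \<Rightarrow> real^'m \<Rightarrow> real \<Rightarrow> real^'n \<Rightarrow> real" where
  "lasso_obj T y lam x = lam / 2 * (norm (T *v x - y))\<^sup>2 + (\<Sum>i\<in>UNIV. \<bar>x $ i\<bar>)"

definition lasso_sol :: "real^'n^'m \<Rightarrow> real^'m \<Rightarrow> real \<Rightarrow> real^'n" where
  "lasso_sol T y lam = (THE x. \<forall>z. lasso_obj T y lam x \<le> lasso_obj T y lam z)"

definition lasso_support :: "real^'n^'m \<Rightarrow> real^'m \<Rightarrow> real \<Rightarrow> 'n set" where
  "lasso_support T y lam = {i. lasso_sol T y lam $ i \<noteq> 0}"

definition gram :: "real^'n^'m \<Rightarrow> 'n \<Rightarrow> 'n \<Rightarrow> real" where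
  "gram T i j = column i T \<bullet> column j T"

text \<open>Positive cone condition: for every nonempty J, with S_J the inverse of
  (T^J)^T T^J (a J x J matrix), S_J is diagonally dominant with nonnegative margin.
  S_J is described as any J-indexed matrix inverting the Gram matrix on J
  (it is unique whenever it exists).\<close>
definition positive_cone_condition :: "real^'n^'m \<Rightarrow> bool" where
  "positive_cone_condition T \<longleftrightarrow>
     (\<forall>J::'n set. J \<noteq> {} \<longrightarrow>
        (\<forall>S::'n \<Rightarrow> 'n \<Rightarrow> real.
           (\<forall>i\<in>J. \<forall>j\<in>J. (\<Sum>k\<in>J. gram T i k * S k j) = (if i = j then 1 else 0))
           \<longrightarrow> (\<forall>i\<in>J. S i i - (\<Sum>j\<in>J - {i}. \<bar>S i j\<bar>) \<ge> 0)))"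

end

theory Submission
  imports Defs
begin

lemma inner_Tv: "u \<bullet> (T *v v) = (\<Sum>j\<in>UNIV. v$j * (column j T \<bullet> u))"
  by (simp add: matrix_mult_sum inner_sum_right inner_commute scalar_mult_eq_scaleR)

lemma col_Tv: "column j T \<bullet> (T *v w) = (\<Sum>k\<in>UNIV. gram T j k * w$k)"
  by (simp add: inner_Tv gram_def inner_commute mult.commute)

lemma small_le0:
  fixes a K :: real
  assumes "\<And>e. 0 < e \<Longrightarrow> e \<le> 1 \<Longrightarrow> a \<le> e * K" "0 \<le> K"
  shows "a \<le> 0"
proof (rule ccontr)
  assume "\<not> a \<le> 0"
  hence a: "a > 0" by simp
  define e where "e = min 1 (a / (K + 1))"
  have e0: "0 < e" using a assms(2) by (simp add: e_def)
  have "e \<le> 1" by (simp add: e_def)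
  hence "a \<le> e * K" using assms(1) e0 by blast
  moreover have "e \<le> a / (K+1)" by (simp add: e_def)
  hence "e * K \<le> a / (K+1) * K" using mult_right_mono assms(2) by blast
  moreover have "a / (K+1) * K < a" using a assms(2) by (simp add: field_simps)
  ultimately show False by linarith
qed

definition corr :: "real^'n^'m \<Rightarrow> real^'m \<Rightarrow> real^'n \<Rightarrow> 'n \<Rightarrow> real" where
  "corr T y x j = column j T \<bullet> (y - T *v x)"

lemma perturb:
  fixes T :: "real^'n^'m" and j :: 'n and h :: real
  defines "\<delta> \<equiv> (\<chi> k. if k = j then h else 0) :: real^'n"
  shows "lasso_obj T y lam (x + \<delta>) = lasso_obj T y lam x
     + lam * (- h * corr T y x j + h^2 / 2 * (norm (column j T))^2) + \<bar>x$j + h\<bar> - \<bar>x$j\<bar>"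
proof -
  have Td: "T *v \<delta> = h *\<^sub>R column j T"
  proof -
    have "\<And>i. (\<delta>$i) *s column i T = (if i = j then h *\<^sub>R column j T else 0)"
      by (simp add: \<delta>_def scalar_mult_eq_scaleR)
    thus ?thesis unfolding matrix_mult_sum by simp
  qed
  have n: "(norm (T *v (x + \<delta>) - y))^2 = (norm (T *v x - y))^2
       + 2 * h * ((T *v x - y) \<bullet> column j T) + h^2 * (norm (column j T))^2"
    unfolding matrix_vector_right_distrib Td power2_norm_eq_inner
    by (simp add: algebra_simps inner_commute power2_eq_square)
  have s: "(\<Sum>i\<in>UNIV. \<bar>(x + \<delta>) $ i\<bar>) = (\<Sum>i\<in>UNIV. \<bar>x $ i\<bar>) + (\<bar>x$j + h\<bar> - \<bar>x$j\<bar>)"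
  proof -
    have "(\<Sum>i\<in>UNIV. \<bar>(x + \<delta>) $ i\<bar>) = (\<Sum>i\<in>UNIV. \<bar>x $ i\<bar> + (if i = j then \<bar>x$j + h\<bar> - \<bar>x$j\<bar> else 0))"
      by (rule sum.cong) (auto simp: \<delta>_def)
    also have "\<dots> = (\<Sum>i\<in>UNIV. \<bar>x $ i\<bar>) + (\<bar>x$j + h\<bar> - \<bar>x$j\<bar>)"
      by (simp add: sum.distrib)
    finally show ?thesis .
  qed
  have c: "(T *v x - y) \<bullet> column j T = - corr T y x j"
    by (simp add: corr_def inner_commute inner_diff_right)
  show ?thesis
    unfolding lasso_obj_def n s c by (simp add: algebra_simps)
qed

lemma kkt_nec:
  fixes T :: "real^'n^'m"
  assumes min: "\<forall>z. lasso_obj T y lam x \<le> lasso_obj T y lam z" and lam: "lam > 0"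
  shows "\<bar>lam * corr T y x j\<bar> \<le> 1 \<and> lam * corr T y x j * x$j = \<bar>x$j\<bar>"
proof -
  define c where "c = corr T y x j"
  define g where "g = (norm (column j T))^2"
  have g0: "g \<ge> 0" by (simp add: g_def)
  have key: "0 \<le> lam * (- h * c + h^2 / 2 * g) + \<bar>x$j + h\<bar> - \<bar>x$j\<bar>" for h
    using min[rule_format, of "x + (\<chi> k. if k = j then h else 0)"] perturb[of T y lam x j h]
    unfolding c_def g_def by linarith
  have A: "\<bar>lam * c\<bar> \<le> 1"
  proof -
    have "- (1 - \<bar>lam * c\<bar>) \<le> 0"
    proof (rule small_le0[of _ "lam * g / 2"])
      fix e :: real assume e: "0 < e" "e \<le> 1"
      define h where "h = e * sgn c"
      have k: "0 \<le> lam * (- h * c) + lam * (h^2 / 2 * g) + (\<bar>x$j + h\<bar> - \<bar>x$j\<bar>)"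
        using key[of h] distrib_left[of lam "- h * c" "h^2 / 2 * g"] by linarith
      have t: "\<bar>x$j + h\<bar> - \<bar>x$j\<bar> \<le> \<bar>h\<bar>" by (smt (verit) abs_triangle_ineq)
      have he: "\<bar>h\<bar> \<le> e" using e by (simp add: h_def abs_mult sgn_if)
      have hc: "h * c = e * \<bar>c\<bar>" by (auto simp add: h_def sgn_if)
      have h2: "h^2 \<le> e^2" using e by (simp add: h_def power_mult_distrib sgn_if)
      have m: "lam * (h^2 / 2 * g) \<le> lam * (e^2 / 2 * g)"
        using h2 g0 lam by (intro mult_left_mono mult_right_mono divide_right_mono) auto
      have "0 \<le> - lam * (e * \<bar>c\<bar>) + lam * (e^2 / 2 * g) + e"
        using k t he m by (simp add: hc)
      hence "0 \<le> e * (1 - \<bar>lam * c\<bar> + e * (lam * g / 2))" using lam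
        by (simp add: algebra_simps abs_mult power2_eq_square)
      hence "0 \<le> 1 - \<bar>lam * c\<bar> + e * (lam * g / 2)" using e by (simp add: zero_le_mult_iff)
      thus "- (1 - \<bar>lam * c\<bar>) \<le> e * (lam * g / 2)" by simp
    next
      show "0 \<le> lam * g / 2" using lam g0 by simp
    qed
    thus ?thesis by simp
  qed
  have B: "\<bar>x$j\<bar> - lam * c * x$j \<le> 0"
  proof (rule small_le0[of _ "lam * g / 2 * (x$j)^2"])
    fix e :: real assume e: "0 < e" "e \<le> 1"
    define h where "h = - e * x$j"
    have "0 \<le> lam * (- h * c + h^2 / 2 * g) + \<bar>x$j + h\<bar> - \<bar>x$j\<bar>" by (rule key)
    moreover have "\<bar>x$j + h\<bar> = (1 - e) * \<bar>x$j\<bar>" 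
    proof -
      have "x$j + h = (1 - e) * x$j" by (simp add: h_def algebra_simps)
      thus ?thesis using e by (simp add: abs_mult)
    qed
    ultimately have "0 \<le> e * (lam * c * x$j - \<bar>x$j\<bar> + e * (lam * g / 2 * (x$j)^2))"
      by (simp add: h_def algebra_simps power2_eq_square)
    hence "0 \<le> lam * c * x$j - \<bar>x$j\<bar> + e * (lam * g / 2 * (x$j)^2)" using e by (simp add: zero_le_mult_iff)
    thus "\<bar>x$j\<bar> - lam * c * x$j \<le> e * (lam * g / 2 * (x$j)^2)" by simp
  next
    show "0 \<le> lam * g / 2 * (x$j)^2" using lam g0 by simp
  qed
  have "lam * c * x$j \<le> \<bar>lam * c\<bar> * \<bar>x$j\<bar>" by (metis abs_ge_self abs_mult)
  also have "\<dots> \<le> 1 * \<bar>x$j\<bar>" using A by (intro mult_right_mono) auto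
  finally have "lam * c * x$j \<le> \<bar>x$j\<bar>" by simp
  with A B show ?thesis unfolding c_def by simp
qed

lemma kkt_suff:
  fixes T :: "real^'n^'m"
  assumes lam: "lam > 0"
    and kkt: "\<forall>j. \<bar>lam * corr T y x j\<bar> \<le> 1 \<and> lam * corr T y x j * x$j = \<bar>x$j\<bar>"
  shows "lasso_obj T y lam x \<le> lasso_obj T y lam w"
proof -
  define c where "c = corr T y x"
  define a where "a = T *v x - y"
  define v where "v = T *v (w - x)"
  have wa: "T *v w - y = a + v" by (simp add: a_def v_def matrix_vector_mult_diff_distrib)
  have e1: "(norm (T *v w - y))^2 \<ge> (norm a)^2 + 2 * (a \<bullet> v)"
    unfolding wa power2_norm_eq_inner by (simp add: inner_add algebra_simps inner_commute)
  have e2: "a \<bullet> v = (\<Sum>j\<in>UNIV. (w$j - x$j) * (- c j))"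
    unfolding a_def v_def c_def corr_def inner_Tv
    by (simp add: inner_diff_right)
  have e3: "0 \<le> \<bar>w$j\<bar> - lam * c j * w$j" for j
  proof -
    have "lam * c j * w$j \<le> \<bar>lam * c j\<bar> * \<bar>w$j\<bar>" by (metis abs_ge_self abs_mult)
    also have "\<dots> \<le> 1 * \<bar>w$j\<bar>" using kkt c_def by (intro mult_right_mono) auto
    finally show ?thesis by simp
  qed
  have e4: "lam * (a \<bullet> v) + (\<Sum>j\<in>UNIV. \<bar>w$j\<bar>) - (\<Sum>j\<in>UNIV. \<bar>x$j\<bar>)
      = (\<Sum>j\<in>UNIV. (\<bar>w$j\<bar> - lam * c j * w$j) + (lam * c j * x$j - \<bar>x$j\<bar>))"
    unfolding e2 by (simp add: sum_distrib_left sum.distrib sum_subtractf algebra_simps)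
  also have "\<dots> = (\<Sum>j\<in>UNIV. \<bar>w$j\<bar> - lam * c j * w$j)"
    using kkt c_def by simp
  also have "\<dots> \<ge> 0" using e3 by (simp add: sum_nonneg)
  finally have e5: "0 \<le> lam * (a \<bullet> v) + (\<Sum>j\<in>UNIV. \<bar>w$j\<bar>) - (\<Sum>j\<in>UNIV. \<bar>x$j\<bar>)" .
  have "lam / 2 * ((norm a)^2 + 2 * (a \<bullet> v)) \<le> lam / 2 * (norm (T *v w - y))^2"
    using e1 lam by (intro mult_left_mono) auto
  thus ?thesis using e5 unfolding lasso_obj_def a_def[symmetric] by (simp add: algebra_simps)
qed

lemma cont_obj: "continuous_on UNIV (lasso_obj T y lam)"
  unfolding lasso_obj_def by (intro continuous_intros)

lemma exist_min:
  fixes T :: "real^'n^'m"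
  assumes lam: "lam > 0"
  shows "\<exists>x. \<forall>z. lasso_obj T y lam x \<le> lasso_obj T y lam z"
proof -
  define f where "f = lasso_obj T y lam"
  define S where "S = {x. f x \<le> f 0}"
  have cl: "closed S" unfolding S_def f_def
    by (intro closed_Collect_le cont_obj continuous_on_const)
  have bd: "S \<subseteq> cball 0 (f 0)"
  proof
    fix x assume "x \<in> S"
    hence "f x \<le> f 0" by (simp add: S_def)
    moreover have "norm x \<le> f x"
      using norm_le_l1_cart[of x] lam unfolding f_def lasso_obj_def by (smt (verit) zero_le_power2 mult_nonneg_nonneg divide_nonneg_pos)
    ultimately show "x \<in> cball 0 (f 0)" by simp
  qed
  have "compact S" using cl bd by (meson bounded_cball bounded_subset compact_eq_bounded_closed)
  moreover have "S \<noteq> {}" by (auto simp: S_def)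
  moreover have "continuous_on S f" unfolding f_def using cont_obj continuous_on_subset by blast
  ultimately obtain x where x: "x \<in> S" "\<forall>z\<in>S. f x \<le> f z" using continuous_attains_inf by blast
  have "\<forall>z. f x \<le> f z"
  proof
    fix z show "f x \<le> f z" using x by (cases "z \<in> S") (auto simp: S_def)
  qed
  thus ?thesis unfolding f_def by blast
qed

lemma uniq_min:
  fixes T :: "real^'n^'m"
  assumes inj: "inj ((*v) T)" and lam: "lam > 0"
    and mx: "\<forall>z. lasso_obj T y lam x \<le> lasso_obj T y lam z"
    and mx': "\<forall>z. lasso_obj T y lam x' \<le> lasso_obj T y lam z"
  shows "x = x'"
proof -
  define a where "a = T *v x - y"
  define b where "b = T *v x' - y"
  define m where "m = (1/2) *\<^sub>R (x + x')"
  have Tm: "T *v m - y = (1/2) *\<^sub>R (a + b)"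
    unfolding m_def a_def b_def matrix_vector_mult_scaleR matrix_vector_right_distrib
    by (simp add: vec_eq_iff field_simps)
  have par: "(norm ((1/2) *\<^sub>R (a + b)))^2 = ((norm a)^2 + (norm b)^2) / 2 - (norm (a - b))^2 / 4"
    unfolding power2_norm_eq_inner by (simp add: inner_add inner_diff algebra_simps inner_commute) (simp add: field_simps)
  have l1: "(\<Sum>i\<in>UNIV. \<bar>m$i\<bar>) \<le> ((\<Sum>i\<in>UNIV. \<bar>x$i\<bar>) + (\<Sum>i\<in>UNIV. \<bar>x'$i\<bar>)) / 2"
  proof -
    have "(\<Sum>i\<in>UNIV. \<bar>m$i\<bar>) \<le> (\<Sum>i\<in>UNIV. (\<bar>x$i\<bar> + \<bar>x'$i\<bar>) / 2)"
      by (intro sum_mono) (simp add: m_def abs_triangle_ineq)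
    also have "\<dots> = ((\<Sum>i\<in>UNIV. \<bar>x$i\<bar>) + (\<Sum>i\<in>UNIV. \<bar>x'$i\<bar>)) / 2"
      by (simp add: sum.distrib flip: sum_divide_distrib)
    finally show ?thesis .
  qed
  have fm: "lasso_obj T y lam m \<le> (lasso_obj T y lam x + lasso_obj T y lam x') / 2 - lam / 8 * (norm (a - b))^2"
  proof -
    have h1: "lam/2 * (((norm a)^2 + (norm b)^2)/2 - (norm (a-b))^2/4) = lam/4*(norm a)^2 + lam/4*(norm b)^2 - lam/8*(norm (a-b))^2"
      by (simp add: field_simps)
    have h2: "\<And>X Y. (lam/2*(norm a)^2 + X + (lam/2*(norm b)^2 + Y))/2 = lam/4*(norm a)^2 + lam/4*(norm b)^2 + X/2 + Y/2"
      by (simp add: field_simps)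
    show ?thesis using l1 unfolding lasso_obj_def Tm par a_def[symmetric] b_def[symmetric] h1 h2 
      using add_divide_distrib[of "(\<Sum>i\<in>UNIV. \<bar>x$i\<bar>)" "(\<Sum>i\<in>UNIV. \<bar>x'$i\<bar>)" 2] by linarith
  qed
  have "lasso_obj T y lam x = lasso_obj T y lam x'" using mx mx' by (meson order_antisym)
  moreover have "lasso_obj T y lam x \<le> lasso_obj T y lam m" using mx by blast
  ultimately have "lam / 8 * (norm (a - b))^2 \<le> 0" using fm by simp
  hence "(norm (a - b))^2 \<le> 0" using lam by (simp add: mult_le_0_iff)
  hence "a = b" by simp
  hence "T *v x = T *v x'" by (simp add: a_def b_def)
  thus ?thesis using inj by (simp add: inj_eq)
qed

lemma sol_min:
  fixes T :: "real^'n^'m"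
  assumes inj: "inj ((*v) T)" and lam: "lam > 0"
  shows "\<forall>z. lasso_obj T y lam (lasso_sol T y lam) \<le> lasso_obj T y lam z"
proof -
  have "\<exists>!x. \<forall>z. lasso_obj T y lam x \<le> lasso_obj T y lam z"
    using exist_min[OF lam] uniq_min[OF inj lam] by blast
  thus ?thesis unfolding lasso_sol_def by (rule theI')
qed

lemma sol_eq:
  fixes T :: "real^'n^'m"
  assumes inj: "inj ((*v) T)" and lam: "lam > 0"
    and mx: "\<forall>z. lasso_obj T y lam x \<le> lasso_obj T y lam z"
  shows "lasso_sol T y lam = x"
  using uniq_min[OF inj lam sol_min[OF inj lam] mx] .

lemma sumJ:
  fixes T :: "real^'n^'m"
  assumes "\<forall>k. k \<notin> J \<longrightarrow> w$k = 0"
  shows "(\<Sum>k\<in>J. gram T j k * w$k) = column j T \<bullet> (T *v w)"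
proof -
  have "(\<Sum>k\<in>J. gram T j k * w$k) = (\<Sum>k\<in>UNIV. gram T j k * w$k)"
    by (rule sum.mono_neutral_left) (use assms in auto)
  thus ?thesis by (simp add: col_Tv)
qed

lemma core_inj:
  fixes T :: "real^'n^'m"
  assumes inj: "inj ((*v) T)" and out: "\<forall>k. k \<notin> J \<longrightarrow> w$k = 0"
    and eq: "\<forall>j\<in>J. (\<Sum>k\<in>J. gram T j k * w$k) = 0"
  shows "w = 0"
proof -
  have "\<forall>j\<in>J. column j T \<bullet> (T *v w) = 0" by (simp add: sumJ[OF out, where T=T, symmetric] eq)
  hence "(T *v w) \<bullet> (T *v w) = 0"
    unfolding inner_Tv[of "T *v w" T w] by (intro sum.neutral) (metis mult_eq_0_iff out)
  hence "T *v w = T *v 0" by simp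
  thus ?thesis using inj by (metis injD)
qed

definition Mop :: "real^'n^'m \<Rightarrow> 'n set \<Rightarrow> real^'n \<Rightarrow> real^'n" where
  "Mop T J u = (\<chi> j. if j \<in> J then (\<Sum>k\<in>J. gram T j k * u$k) else u$j)"

lemma Mop_linear: "linear (Mop T J)"
  by (rule linearI) (simp_all add: Mop_def vec_eq_iff sum.distrib algebra_simps sum_distrib_left)

lemma Mop_surj:
  fixes T :: "real^'n^'m"
  assumes inj: "inj ((*v) T)"
  shows "surj (Mop T J)"
proof -
  have "inj (Mop T J)"
    unfolding linear_injective_0[OF Mop_linear]
  proof (intro allI impI)
    fix u assume u: "Mop T J u = 0"
    have out: "\<forall>k. k \<notin> J \<longrightarrow> u$k = 0"
    proof (intro allI impI)
      fix k assume "k \<notin> J"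
      thus "u$k = 0" using arg_cong[OF u, of "\<lambda>v. v$k"] by (simp add: Mop_def)
    qed
    have "\<forall>j\<in>J. (\<Sum>k\<in>J. gram T j k * u$k) = 0"
    proof
      fix j assume "j \<in> J"
      thus "(\<Sum>k\<in>J. gram T j k * u$k) = 0" using arg_cong[OF u, of "\<lambda>v. v$j"] by (simp add: Mop_def)
    qed
    thus "u = 0" using core_inj[OF inj out] by blast
  qed
  thus ?thesis by (intro linear_injective_imp_surjective Mop_linear) auto
qed

definition solveJ :: "real^'n^'m \<Rightarrow> 'n set \<Rightarrow> real^'n \<Rightarrow> real^'n" where
  "solveJ T J b = (SOME u. Mop T J u = b)"

lemma solveJ:
  fixes T :: "real^'n^'m"
  assumes inj: "inj ((*v) T)"
  shows "(\<forall>j\<in>J. (\<Sum>k\<in>J. gram T j k * solveJ T J b $ k) = b$j) \<and> (\<forall>j. j \<notin> J \<longrightarrow> solveJ T J b $ j = b$j)"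
proof -
  have "Mop T J (solveJ T J b) = b"
    unfolding solveJ_def using Mop_surj[OF inj, of J] by (metis (mono_tags, lifting) someI_ex surjD)
  hence h: "\<forall>j. Mop T J (solveJ T J b) $ j = b$j" by simp
  show ?thesis
  proof (intro conjI ballI allI impI)
    fix j assume "j \<in> J" thus "(\<Sum>k\<in>J. gram T j k * solveJ T J b $ k) = b$j"
      using h[rule_format, of j] by (simp add: Mop_def)
  next
    fix j assume "j \<notin> J" thus "solveJ T J b $ j = b$j"
      using h[rule_format, of j] by (simp add: Mop_def)
  qed
qed

definition sg :: "'n set \<Rightarrow> 'n \<Rightarrow> real" where
  "sg P j = (if j \<in> P then 1 else -1)"

definition Smat :: "real^'n^'m \<Rightarrow> 'n set \<Rightarrow> 'n \<Rightarrow> 'n \<Rightarrow> real" where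
  "Smat T J k j = solveJ T J (\<chi> i. if i = j then 1 else 0) $ k"

lemma Smat_inv:
  fixes T :: "real^'n^'m"
  assumes inj: "inj ((*v) T)"
  shows "\<forall>i\<in>J. \<forall>j\<in>J. (\<Sum>k\<in>J. gram T i k * Smat T J k j) = (if i = j then 1 else 0)"
  using solveJ[OF inj] unfolding Smat_def by simp

definition dvec :: "real^'n^'m \<Rightarrow> 'n set \<Rightarrow> 'n set \<Rightarrow> real^'n" where
  "dvec T J P = (\<chi> j. if j \<in> J then (\<Sum>k\<in>J. Smat T J j k * sg P k) else 0)"

lemma dvec_eq:
  fixes T :: "real^'n^'m"
  assumes inj: "inj ((*v) T)" and i: "i \<in> J"
  shows "(\<Sum>j\<in>J. gram T i j * dvec T J P $ j) = sg P i"
proof -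
  have "(\<Sum>j\<in>J. gram T i j * dvec T J P $ j) = (\<Sum>j\<in>J. \<Sum>k\<in>J. gram T i j * Smat T J j k * sg P k)"
    by (rule sum.cong) (auto simp: dvec_def sum_distrib_left mult.assoc)
  also have "\<dots> = (\<Sum>k\<in>J. \<Sum>j\<in>J. gram T i j * Smat T J j k * sg P k)"
    by (rule sum.swap)
  also have "\<dots> = (\<Sum>k\<in>J. (\<Sum>j\<in>J. gram T i j * Smat T J j k) * sg P k)"
    by (simp add: sum_distrib_right)
  also have "\<dots> = (\<Sum>k\<in>J. if i = k then sg P k else 0)"
    using Smat_inv[OF inj] i by (intro sum.cong) auto
  also have "\<dots> = sg P i" using i by simp
  finally show ?thesis .
qed

lemma dvec_sign:
  fixes T :: "real^'n^'m"
  assumes inj: "inj ((*v) T)" and cone: "positive_cone_condition T" and i: "i \<in> J"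
  shows "0 \<le> sg P i * dvec T J P $ i"
proof -
  let ?S = "Smat T J"
  have fin: "finite J" by simp
  have dd: "?S i i - (\<Sum>k\<in>J - {i}. \<bar>?S i k\<bar>) \<ge> 0"
    using cone Smat_inv[OF inj, of J] i unfolding positive_cone_condition_def by blast
  have "sg P i * dvec T J P $ i = (\<Sum>k\<in>J. ?S i k * (sg P i * sg P k))"
    using i by (simp add: dvec_def sum_distrib_left algebra_simps)
  also have "\<dots> = ?S i i * (sg P i * sg P i) + (\<Sum>k\<in>J - {i}. ?S i k * (sg P i * sg P k))"
    using i fin by (simp add: sum.remove)
  also have "\<dots> = ?S i i + (\<Sum>k\<in>J - {i}. ?S i k * (sg P i * sg P k))"
    by (simp add: sg_def)
  also have "\<dots> \<ge> ?S i i + (\<Sum>k\<in>J - {i}. - \<bar>?S i k\<bar>)"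
    by (intro add_left_mono sum_mono) (auto simp: sg_def)
  finally show ?thesis using dd by (simp add: sum_negf)
qed

definition z0 :: "real^'n^'m \<Rightarrow> real^'m \<Rightarrow> 'n set \<Rightarrow> real^'n" where
  "z0 T y J = solveJ T J (\<chi> j. if j \<in> J then column j T \<bullet> y else 0)"

definition zr :: "real^'n^'m \<Rightarrow> real^'m \<Rightarrow> 'n set \<Rightarrow> 'n set \<Rightarrow> real \<Rightarrow> real^'n" where
  "zr T y J P r = z0 T y J - r *\<^sub>R dvec T J P"

lemma zr_out:
  fixes T :: "real^'n^'m"
  assumes inj: "inj ((*v) T)" and "j \<notin> J"
  shows "zr T y J P r $ j = 0"
  using solveJ[OF inj] assms(2) by (simp add: zr_def z0_def dvec_def)

lemma zr_corr:
  fixes T :: "real^'n^'m"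
  assumes inj: "inj ((*v) T)" and j: "j \<in> J"
  shows "corr T y (zr T y J P r) j = r * sg P j"
proof -
  have out: "\<forall>k. k \<notin> J \<longrightarrow> zr T y J P r $ k = 0" using zr_out[OF inj] by blast
  have "column j T \<bullet> (T *v zr T y J P r) = (\<Sum>k\<in>J. gram T j k * zr T y J P r $ k)"
    using sumJ[OF out, where T=T] by simp
  also have "\<dots> = (\<Sum>k\<in>J. gram T j k * z0 T y J $ k) - r * (\<Sum>k\<in>J. gram T j k * dvec T J P $ k)"
    by (simp add: zr_def algebra_simps sum_subtractf sum_distrib_left)
  also have "\<dots> = column j T \<bullet> y - r * sg P j"
    using solveJ[OF inj] j dvec_eq[OF inj j] by (simp add: z0_def)
  finally show ?thesis by (simp add: corr_def inner_diff_right)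
qed

definition Kset :: "real^'n^'m \<Rightarrow> real^'m \<Rightarrow> 'n set \<Rightarrow> 'n set \<Rightarrow> real \<Rightarrow> real \<Rightarrow> real set" where
  "Kset T y J P t s = {r. t \<le> r \<and> r \<le> s \<and> (\<forall>j\<in>J. 0 \<le> sg P j * zr T y J P r $ j)
      \<and> (\<forall>j. j \<notin> J \<longrightarrow> \<bar>corr T y (zr T y J P r) j\<bar> \<le> r)}"

lemma sg_abs: "\<bar>sg P j\<bar> = 1" by (simp add: sg_def)

lemma K_sol:
  fixes T :: "real^'n^'m"
  assumes inj: "inj ((*v) T)" and t: "t > 0" and r: "r \<in> Kset T y J P t s"
  shows "lasso_sol T y (1/r) = zr T y J P r"
proof -
  let ?z = "zr T y J P r"
  have r0: "r > 0" using r t by (simp add: Kset_def)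
  have "\<forall>j. \<bar>1/r * corr T y ?z j\<bar> \<le> 1 \<and> 1/r * corr T y ?z j * ?z$j = \<bar>?z$j\<bar>"
  proof
    fix j show "\<bar>1/r * corr T y ?z j\<bar> \<le> 1 \<and> 1/r * corr T y ?z j * ?z$j = \<bar>?z$j\<bar>"
    proof (cases "j \<in> J")
      case True
      hence c: "1/r * corr T y ?z j = sg P j" using zr_corr[OF inj True] r0 by simp
      have "0 \<le> sg P j * ?z$j" using r True by (simp add: Kset_def)
      hence "sg P j * ?z$j = \<bar>?z$j\<bar>" by (auto simp: sg_def split: if_splits)
      thus ?thesis using c by (simp add: sg_def)
    next
      case False
      hence "?z$j = 0" using zr_out[OF inj] by blast
      moreover have "\<bar>corr T y ?z j\<bar> \<le> r" using r False by (simp add: Kset_def)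
      ultimately show ?thesis using r0 by (simp add: abs_mult)
    qed
  qed
  hence "\<forall>w. lasso_obj T y (1/r) ?z \<le> lasso_obj T y (1/r) w"
    using kkt_suff r0 by (metis divide_pos_pos zero_less_one)
  thus ?thesis using sol_eq[OF inj] r0 by simp
qed

lemma K_mono:
  fixes T :: "real^'n^'m"
  assumes inj: "inj ((*v) T)" and cone: "positive_cone_condition T" and t: "t > 0"
    and r1: "r1 \<in> Kset T y J P t s" and r2: "r2 \<in> Kset T y J P t s" and le: "r1 \<le> r2"
  shows "\<bar>zr T y J P r2 $ i\<bar> \<le> \<bar>zr T y J P r1 $ i\<bar>"
proof (cases "i \<in> J")
  case True
  have ab: "\<bar>zr T y J P r $ i\<bar> = sg P i * zr T y J P r $ i" if "r \<in> Kset T y J P t s" for r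
  proof -
    have "0 \<le> sg P i * zr T y J P r $ i" using that True by (simp add: Kset_def)
    thus ?thesis by (auto simp: sg_def split: if_splits)
  qed
  have "sg P i * zr T y J P r2 $ i = sg P i * z0 T y J $ i - r2 * (sg P i * dvec T J P $ i)"
    by (simp add: zr_def algebra_simps)
  also have "\<dots> \<le> sg P i * z0 T y J $ i - r1 * (sg P i * dvec T J P $ i)"
    using dvec_sign[OF inj cone True, of P] le by (simp add: mult_right_mono)
  also have "\<dots> = sg P i * zr T y J P r1 $ i"
    by (simp add: zr_def algebra_simps)
  finally show ?thesis using ab[OF r1] ab[OF r2] by simp
next
  case False
  thus ?thesis using zr_out[OF inj] by simp
qed

lemma K_closed:
  fixes T :: "real^'n^'m"
  shows "closed (Kset T y J P t s)"
proof -
  have eq: "Kset T y J P t s = {r. t \<le> r} \<inter> {r. r \<le> s} \<inter> (\<Inter>j\<in>J. {r. 0 \<le> sg P j * zr T y J P r $ j})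
      \<inter> (\<Inter>j\<in>-J. {r. \<bar>corr T y (zr T y J P r) j\<bar> \<le> r})"
    by (auto simp: Kset_def)
  have c1: "continuous_on UNIV (\<lambda>r. sg P j * zr T y J P r $ j)" for j
    unfolding zr_def by (intro continuous_intros)
  have c2: "continuous_on UNIV (\<lambda>r. \<bar>corr T y (zr T y J P r) j\<bar>)" for j
    unfolding zr_def corr_def by (simp add: matrix_vector_mult_diff_distrib matrix_vector_mult_scaleR) (intro continuous_intros)
  show ?thesis unfolding eq
    by (intro closed_Int closed_INT ballI closed_Collect_le continuous_on_const continuous_on_id c1 c2)
qed

lemma K_cover:
  fixes T :: "real^'n^'m" and y :: "real^'m" and r :: real
  assumes inj: "inj ((*v) T)" and t: "t > 0" and r: "t \<le> r" "r \<le> s"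
  defines "x \<equiv> lasso_sol T y (1/r)"
  shows "r \<in> Kset T y {j. x$j \<noteq> 0} {j. x$j > 0} t s"
proof -
  define J where "J = {j. x$j \<noteq> 0}"
  define P where "P = {j. x$j > 0}"
  have r0: "r > 0" using r t by simp
  have lr: "1/r > 0" using r0 by simp
  have kkt: "\<bar>1/r * corr T y x j\<bar> \<le> 1 \<and> 1/r * corr T y x j * x$j = \<bar>x$j\<bar>" for j
    using kkt_nec[OF sol_min[OF inj lr] lr] unfolding x_def by blast
  have cj: "corr T y x j = r * sg P j" if "j \<in> J" for j
  proof -
    have a: "corr T y x j * x$j = r * \<bar>x$j\<bar>" using kkt[of j] r0 by (simp add: field_simps)
    show ?thesis
    proof (cases "x$j > 0")
      case True thus ?thesis using a by (simp add: P_def sg_def)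
    next
      case False hence "x$j < 0" using that by (simp add: J_def)
      moreover have "(corr T y x j + r) * x$j = 0" using a \<open>x$j < 0\<close> by (simp add: algebra_simps)
      ultimately show ?thesis by (simp add: P_def sg_def)
    qed
  qed
  define w where "w = x - zr T y J P r"
  have outx: "\<forall>k. k \<notin> J \<longrightarrow> x$k = 0" by (simp add: J_def)
  have outz: "\<forall>k. k \<notin> J \<longrightarrow> zr T y J P r $ k = 0" using zr_out[OF inj] by blast
  have outw: "\<forall>k. k \<notin> J \<longrightarrow> w$k = 0" using outx outz by (simp add: w_def)
  have "\<forall>j\<in>J. (\<Sum>k\<in>J. gram T j k * w$k) = 0"
  proof
    fix j assume j: "j \<in> J"
    have "(\<Sum>k\<in>J. gram T j k * w$k) = (\<Sum>k\<in>J. gram T j k * x$k) - (\<Sum>k\<in>J. gram T j k * zr T y J P r $ k)"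
      by (simp add: w_def algebra_simps sum_subtractf)
    also have "\<dots> = column j T \<bullet> (T *v x) - column j T \<bullet> (T *v zr T y J P r)"
      using sumJ[OF outx, where T=T] sumJ[OF outz, where T=T] by simp
    also have "\<dots> = corr T y (zr T y J P r) j - corr T y x j"
      by (simp add: corr_def inner_diff_right)
    also have "\<dots> = 0" using cj[OF j] zr_corr[OF inj j] by simp
    finally show "(\<Sum>k\<in>J. gram T j k * w$k) = 0" .
  qed
  hence "w = 0" using core_inj[OF inj outw] by blast
  hence xz: "x = zr T y J P r" by (simp add: w_def)
  have "\<forall>j\<in>J. 0 \<le> sg P j * zr T y J P r $ j"
    unfolding xz[symmetric] by (auto simp: J_def P_def sg_def)
  moreover have "\<forall>j. j \<notin> J \<longrightarrow> \<bar>corr T y (zr T y J P r) j\<bar> \<le> r"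
  proof (intro allI impI)
    fix j
    have "\<bar>1/r * corr T y x j\<bar> \<le> 1" using kkt by blast
    hence "\<bar>corr T y x j\<bar> \<le> r" using r0 by (simp add: abs_mult field_simps)
    thus "\<bar>corr T y (zr T y J P r) j\<bar> \<le> r" by (simp add: xz)
  qed
  ultimately show ?thesis using r unfolding Kset_def J_def[symmetric] P_def[symmetric] by blast
qed

lemma cover_mono:
  fixes g :: "real \<Rightarrow> real"
  assumes "finite F" "\<forall>C\<in>F. closed C" "\<forall>C\<in>F. \<forall>u\<in>C. \<forall>v\<in>C. u \<le> v \<longrightarrow> g v \<le> g u"
    "{a..b} \<subseteq> \<Union>F" "a \<le> b"
  shows "g b \<le> g a"
  using assms
proof (induction "card F" arbitrary: F a rule: less_induct)
  case less
  obtain C where C: "C \<in> F" "a \<in> C" using less.prems(4,5) by auto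
  show ?case
  proof (cases "b \<in> C")
    case True thus ?thesis using less.prems(3,5) C by blast
  next
    case False
    define D where "D = C \<inter> {a..b}"
    have Dcl: "closed D" using less.prems(2) C by (simp add: D_def closed_Int)
    have Dne: "D \<noteq> {}" using C less.prems(5) by (auto simp: D_def)
    have Dbd: "bdd_above D" by (auto simp: D_def bdd_above_def)
    define q where "q = Sup D"
    have qD: "q \<in> D" using closed_contains_Sup[OF Dne Dbd Dcl] by (simp add: q_def)
    have qb: "q < b" using qD False by (auto simp: D_def le_less)
    have gq: "g q \<le> g a" using qD C less.prems(3) by (auto simp: D_def)
    have sub: "{q<..b} \<subseteq> \<Union>(F - {C})"
    proof
      fix r assume r: "r \<in> {q<..b}"
      have "a \<le> q" using qD by (simp add: D_def)
      hence "r \<in> {a..b}" using r by auto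
      then obtain C' where C': "C' \<in> F" "r \<in> C'" using less.prems(4) by auto
      have "r \<notin> C"
      proof
        assume "r \<in> C" hence "r \<in> D" using \<open>r \<in> {a..b}\<close> by (simp add: D_def)
        hence "r \<le> q" unfolding q_def using Dbd by (rule cSup_upper)
        thus False using r by simp
      qed
      thus "r \<in> \<Union>(F - {C})" using C' by auto
    qed
    have "closed (\<Union>(F - {C}))" using less.prems(1,2) by (intro closed_Union) auto
    hence "closure {q<..b} \<subseteq> \<Union>(F - {C})" by (rule closure_minimal[OF sub])
    hence sub2: "{q..b} \<subseteq> \<Union>(F - {C})" using qb by simp
    have "card (F - {C}) < card F" by (rule card_Diff1_less[OF less.prems(1) C(1)])
    hence "g b \<le> g q"
      using less.hyps[of "F - {C}" q] less.prems(1,2,3) sub2 qb by auto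
    thus ?thesis using gq by simp
  qed
qed

theorem mainTheorem18:
  fixes T :: "real^'n^'m" and y :: "real^'m" and lam mu :: real and i :: 'n
  assumes "inj ((*v) T)"
    and "positive_cone_condition T"
    and "lam > 0"
    and "i \<in> lasso_support T y lam"
    and "0 < mu" and "mu \<le> lam"
  shows "\<bar>lasso_sol T y mu $ i\<bar> \<le> \<bar>lasso_sol T y lam $ i\<bar>"
proof -
  note inj = assms(1) and cone = assms(2)
  define t where "t = 1 / lam"
  define s where "s = 1 / mu"
  have t0: "t > 0" using assms by (simp add: t_def)
  have ts: "t \<le> s" using assms by (simp add: t_def s_def frac_le)
  define g where "g r = \<bar>lasso_sol T y (1/r) $ i\<bar>" for r
  define F where "F = (\<lambda>(J, P). Kset T y J P t s) ` (UNIV :: ('n set \<times> 'n set) set)"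
  have "finite F" unfolding F_def by simp
  moreover have "\<forall>C\<in>F. closed C" unfolding F_def using K_closed by auto
  moreover have "\<forall>C\<in>F. \<forall>u\<in>C. \<forall>v\<in>C. u \<le> v \<longrightarrow> g v \<le> g u"
    unfolding F_def g_def
    using K_sol[OF inj t0] K_mono[OF inj cone t0] by auto
  moreover have "{t..s} \<subseteq> \<Union>F"
  proof
    fix r assume "r \<in> {t..s}"
    hence "r \<in> Kset T y {j. lasso_sol T y (1/r) $ j \<noteq> 0} {j. lasso_sol T y (1/r) $ j > 0} t s"
      using K_cover[OF inj t0] by auto
    thus "r \<in> \<Union>F" unfolding F_def by blast
  qed
  ultimately have "g s \<le> g t" using cover_mono ts by blast
  thus ?thesis using assms by (simp add: g_def t_def s_def)
qed
end
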